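(* Let $\lambda$ be a partition with at most $N$ parts, $T$ a column-strict tableau of shape $\lambda$ and $\theta\in\mathsf M^{(N)}$ the matrix attached to $T$. Then $\psi_T(q,t)=c_N(\theta;t^{N-1}q^{\lambda_1},t^{N-2}q^{\lambda_2},\dots,q^{\lambda_N};q,t)$.
   Context: $(p;q)_n=(1-p)\cdots(1-q^{n-1}p)$, $n\in\mathbb N\cup\{\infty\}$. A tableau $T$ of shape $\lambda$ is a sequence $\emptyset=\lambda^{(0)}\subset\lambda^{(1)}\subset\dots\subset\lambda^{(N)}=\lambda$ of partitions with each $\lambda^{(k)}-\lambda^{(k-1)}$ a horizontal strip; its matrix is $\theta_{i,j}=\lambda^{(j)}_i-\lambda^{(j-1)}_i$ ($i<j$), an element of $\mathsf M^{(N)}$ (strictly upper triangular nonnegative integer matrices). With $f(u)=(tu;q)_\infty/(qu;q)_\infty$, $\psi_{\lambda/\mu}=\prod_{1\le i\le j\le\ell(\mu)}\frac{f(q^{\mu_i-\mu_j}t^{j-i})f(q^{\lambda_i-\lambda_{j+1}}t^{j-i})}{f(q^{\lambda_i-\mu_j}t^{j-i})f(q^{\mu_i-\lambda_{j+1}}t^{j-i})}$ and $\psi_T=\prod_{k=1}^N\psi_{\lambda^{(k)}/\lambda^{(k-1)}}$. $c_N$: $c_1=1$, $c_N(\theta;z)=c_{N-1}(\theta';q^{-\theta_{1,N}}z_1,\dots,q^{-\theta_{N-1,N}}z_{N-1})\prod_{1\le i\le j\le N-1}\frac{(tz_{j+1}/z_i;q)_{\theta_{i,N}}}{(qz_{j+1}/z_i;q)_{\theta_{i,N}}}\frac{(q^{1-\theta_{j,N}}z_j/(tz_i);q)_{\theta_{i,N}}}{(q^{-\theta_{j,N}}z_j/z_i;q)_{\theta_{i,N}}}$,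 $\theta'$ the upper-left $(N-1)\times(N-1)$ block. *)

theory Defs
  imports "HOL-Analysis.Analysis"
begin

definition qpoch :: "complex \<Rightarrow> complex \<Rightarrow> nat \<Rightarrow> complex" where
  "qpoch p q n = (\<Prod>k<n. (1 - q ^ k * p))"

definition qpoch_inf :: "complex \<Rightarrow> complex \<Rightarrow> complex" where
  "qpoch_inf p q = (\<Prod>k. (1 - q ^ k * p))"

definition fqt :: "complex \<Rightarrow> complex \<Rightarrow> complex \<Rightarrow> complex" where
  "fqt q t u = qpoch_inf (t * u) q / qpoch_inf (q * u) q"

text \<open>Partitions are represented as functions nat \<Rightarrow> nat, indexed from 1
  (lam i is the i-th part); index 0 is unused and fixed to 0.\<close>

definition is_partition :: "(nat \<Rightarrow> nat) \<Rightarrow> bool" where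
  "is_partition lam \<longleftrightarrow> lam 0 = 0 \<and> (\<forall>i\<ge>1. lam (Suc i) \<le> lam i)
      \<and> (\<exists>n. \<forall>i>n. lam i = 0)"

definition plength :: "(nat \<Rightarrow> nat) \<Rightarrow> nat" where
  "plength mu = card {i. 1 \<le> i \<and> 0 < mu i}"

definition horizontal_strip :: "(nat \<Rightarrow> nat) \<Rightarrow> (nat \<Rightarrow> nat) \<Rightarrow> bool" where
  "horizontal_strip lam mu \<longleftrightarrow> (\<forall>i\<ge>1. lam (Suc i) \<le> mu i \<and> mu i \<le> lam i)"

text \<open>A (column-strict) tableau of shape lam with entries in {1..N}: a sequence
  tab 0 = empty \<subseteq> tab 1 \<subseteq> ... \<subseteq> tab N = lam of partitions with horizontal-strip
  differences.\<close>

definition is_tableau :: "nat \<Rightarrow> (nat \<Rightarrow> nat) \<Rightarrow> (nat \<Rightarrow> nat \<Rightarrow> nat) \<Rightarrow> bool" where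
  "is_tableau N lam tab \<longleftrightarrow> tab 0 = (\<lambda>_. 0) \<and> tab N = lam
     \<and> (\<forall>k\<in>{1..N}. is_partition (tab k) \<and> horizontal_strip (tab k) (tab (k - 1)))"

definition tab_matrix :: "(nat \<Rightarrow> nat \<Rightarrow> nat) \<Rightarrow> nat \<Rightarrow> nat \<Rightarrow> nat" where
  "tab_matrix tab i j = tab j i - tab (j - 1) i"

definition psi_skew :: "complex \<Rightarrow> complex \<Rightarrow> (nat \<Rightarrow> nat) \<Rightarrow> (nat \<Rightarrow> nat) \<Rightarrow> complex" where
  "psi_skew q t lam mu =
    (\<Prod>j\<in>{1..plength mu}. \<Prod>i\<in>{1..j}.
       fqt q t (q powi (int (mu i) - int (mu j)) * t ^ (j - i))
     * fqt q t (q powi (int (lam i) - int (lam (Suc j))) * t ^ (j - i))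
     / (fqt q t (q powi (int (lam i) - int (mu j)) * t ^ (j - i))
     * fqt q t (q powi (int (mu i) - int (lam (Suc j))) * t ^ (j - i))))"

definition psi_tab :: "complex \<Rightarrow> complex \<Rightarrow> nat \<Rightarrow> (nat \<Rightarrow> nat \<Rightarrow> nat) \<Rightarrow> complex" where
  "psi_tab q t N tab = (\<Prod>k\<in>{1..N}. psi_skew q t (tab k) (tab (k - 1)))"

text \<open>The upper-left block theta' is the
  same function (c_n only reads entries with indices \<le> n). c 0 is an unused convention.\<close>

fun cN :: "nat \<Rightarrow> (nat \<Rightarrow> nat \<Rightarrow> nat) \<Rightarrow> (nat \<Rightarrow> complex) \<Rightarrow> complex \<Rightarrow> complex \<Rightarrow> complex" where
  "cN 0 th z q t = 1"
| "cN (Suc n) th z q t =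
    (if n = 0 then 1 else
      cN n th (\<lambda>i. q powi (- int (th i (Suc n))) * z i) q t *
      (\<Prod>j\<in>{1..n}. \<Prod>i\<in>{1..j}.
         qpoch (t * z (Suc j) / z i) q (th i (Suc n))
         / qpoch (q * z (Suc j) / z i) q (th i (Suc n))
         * (qpoch (q powi (1 - int (th j (Suc n))) * z j / (t * z i)) q (th i (Suc n))
         / qpoch (q powi (- int (th j (Suc n))) * z j / z i) q (th i (Suc n)))))"

end

theory Submission
  imports Defs
begin

lemma qinf_conv:
  fixes q p :: complex assumes "norm q < 1"
  shows "convergent_prod (\<lambda>k. 1 - q ^ k * p)"
proof -
  have "summable (\<lambda>k. norm p * norm q ^ k)"
    using assms by (intro summable_mult summable_geometric) auto
  then have "summable (\<lambda>k. norm ((1 - q ^ k * p) - 1))"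
    by (simp add: norm_mult norm_power mult.commute)
  then show ?thesis
    by (intro abs_convergent_prod_imp_convergent_prod summable_imp_abs_convergent_prod)
qed

lemma qinf_split:
  fixes q p :: complex assumes "norm q < 1"
  shows "qpoch_inf p q = qpoch p q m * qpoch_inf (q ^ m * p) q"
proof -
  have c: "convergent_prod (\<lambda>k. 1 - q ^ k * (q ^ m * p))" by (rule qinf_conv[OF assms])
  have "(\<lambda>k. 1 - q ^ k * p) has_prod ((\<Prod>k<m. 1 - q ^ k * p) * (\<Prod>k. 1 - q ^ (k + m) * p))"
    using has_prod_ignore_initial_segment'[OF qinf_conv[OF assms]] by simp
  moreover have "(\<lambda>k. 1 - q ^ (k + m) * p) = (\<lambda>k. 1 - q ^ k * (q ^ m * p))"
    by (simp add: power_add mult.assoc)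
  ultimately have h: "(\<lambda>k. 1 - q ^ k * p) has_prod (qpoch p q m * qpoch_inf (q ^ m * p) q)"
    unfolding qpoch_def qpoch_inf_def by simp
  have "(\<lambda>k. 1 - q ^ k * p) has_prod qpoch_inf p q"
    unfolding qpoch_inf_def using qinf_conv[OF assms] convergent_prod_has_prod by blast
  from has_prod_unique2[OF this h] show ?thesis .
qed

lemma qinf_nonzero:
  fixes q p :: complex assumes "norm q < 1" "\<And>k. q ^ k * p \<noteq> 1"
  shows "qpoch_inf p q \<noteq> 0"
  unfolding qpoch_inf_def using assms qinf_conv[OF assms(1)]
  by (intro prodinf_nonzero) auto

lemma f_shift:
  fixes q t u :: complex assumes "norm q < 1"
  shows "fqt q t u = qpoch (t*u) q m / qpoch (q*u) q m * fqt q t (q ^ m * u)"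
proof -
  have 1: "qpoch_inf (t*u) q = qpoch (t*u) q m * qpoch_inf (t * (q^m*u)) q"
    using qinf_split[OF assms, of "t*u" m] by (simp add: mult_ac)
  have 2: "qpoch_inf (q*u) q = qpoch (q*u) q m * qpoch_inf (q * (q^m*u)) q"
    using qinf_split[OF assms, of "q*u" m] by (simp add: mult_ac)
  show ?thesis unfolding fqt_def 1 2 by (simp add: times_divide_times_eq)
qed

definition EE :: "complex \<Rightarrow> complex \<Rightarrow> int \<Rightarrow> int \<Rightarrow> complex" where
  "EE q t a b = q powi a * t powi b"

lemma EE_mult: assumes "q \<noteq> 0" "t \<noteq> 0"
  shows "EE q t a b * EE q t c d = EE q t (a + c) (b + d)"
  using assms by (simp add: EE_def power_int_add mult_ac)

lemma EE_div: assumes "q \<noteq> 0" "t \<noteq> 0"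
  shows "EE q t a b / EE q t c d = EE q t (a - c) (b - d)"
  using assms by (simp add: EE_def power_int_diff field_simps)

lemma EE_nz: assumes "q \<noteq> 0" "t \<noteq> 0" shows "EE q t a b \<noteq> 0"
  using assms by (simp add: EE_def)

lemma EE_00: "EE q t 0 0 = 1" by (simp add: EE_def)

lemma EE_qpow: assumes "q \<noteq> 0" "t \<noteq> 0"
  shows "q ^ k * EE q t a b = EE q t (a + int k) b"
  using EE_mult[OF assms, of "int k" 0 a b] by (simp add: EE_def add.commute)

lemma EE_q: assumes "q \<noteq> 0" "t \<noteq> 0"
  shows "q * EE q t a b = EE q t (a + 1) b"
  using EE_qpow[OF assms, of 1 a b] by simp

lemma EE_t: assumes "q \<noteq> 0" "t \<noteq> 0"
  shows "t * EE q t a b = EE q t a (b + 1)"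
  using EE_mult[OF assms, of 0 1 a b] by (simp add: EE_def add.commute)

lemma qpoch_reflect:
  assumes "q \<noteq> 0" "t \<noteq> 0"
  shows "qpoch (EE q t x y) q m =
     (\<Prod>k<m. - EE q t (x + int k) y) * qpoch (EE q t (1 - int m - x) (- y)) q m"
proof -
  have "qpoch (EE q t (1 - int m - x) (- y)) q m = (\<Prod>k<m. 1 - EE q t (1 - int m - x + int k) (- y))"
    unfolding qpoch_def using EE_qpow[OF assms] by (simp add: add.commute)
  also have "\<dots> = (\<Prod>k<m. 1 - EE q t (1 - int m - x + int (m - Suc k)) (- y))"
    by (rule prod.nat_diff_reindex[symmetric])
  also have "\<dots> = (\<Prod>k<m. 1 - EE q t (- x - int k) (- y))"
    by (rule prod.cong) (auto simp: of_nat_diff algebra_simps)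
  finally have 1: "qpoch (EE q t (1 - int m - x) (- y)) q m = (\<Prod>k<m. 1 - EE q t (- x - int k) (- y))" .
  have 2: "qpoch (EE q t x y) q m = (\<Prod>k<m. 1 - EE q t (x + int k) y)"
    unfolding qpoch_def using EE_qpow[OF assms] by (simp add: add.commute)
  have "\<And>k. 1 - EE q t (x + int k) y = (- EE q t (x + int k) y) * (1 - EE q t (- x - int k) (- y))"
  proof -
    fix k
    have "EE q t (x + int k) y * EE q t (- x - int k) (- y) = 1"
      using EE_mult[OF assms] EE_00 by simp
    then show "1 - EE q t (x + int k) y = (- EE q t (x + int k) y) * (1 - EE q t (- x - int k) (- y))"
      by (simp add: algebra_simps)
  qed
  then show ?thesis unfolding 1 2 by (simp add: prod.distrib[symmetric])
qed

lemma fqt_nz: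
  assumes q: "norm q < 1" "q \<noteq> 0" and t: "t \<noteq> 0"
    and gen: "\<And>a b :: int. (a, b) \<noteq> (0, 0) \<Longrightarrow> q powi a * t powi b \<noteq> 1"
    and b: "0 \<le> b" and e: "b = 0 \<Longrightarrow> 0 \<le> e"
  shows "fqt q t (EE q t e b) \<noteq> 0"
proof -
  have g: "EE q t x y \<noteq> 1" if "(x, y) \<noteq> (0, 0)" for x y
    using gen[OF that] by (simp add: EE_def)
  have "qpoch_inf (t * EE q t e b) q \<noteq> 0"
  proof (rule qinf_nonzero[OF q(1)])
    fix k show "q ^ k * (t * EE q t e b) \<noteq> 1"
      using g[of "e + int k" "b + 1"] b by (simp add: EE_t[OF q(2) t] EE_qpow[OF q(2) t])
  qed
  moreover have "qpoch_inf (q * EE q t e b) q \<noteq> 0"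
  proof (rule qinf_nonzero[OF q(1)])
    fix k show "q ^ k * (q * EE q t e b) \<noteq> 1"
      using g[of "e + 1 + int k" "b"] b e by (cases "b = 0") (auto simp: EE_q[OF q(2) t] EE_qpow[OF q(2) t])
  qed
  ultimately show ?thesis unfolding fqt_def by simp
qed

lemma core:
  assumes q: "norm q < 1" "q \<noteq> 0" and t: "t \<noteq> 0"
    and gen: "\<And>a b :: int. (a, b) \<noteq> (0, 0) \<Longrightarrow> q powi a * t powi b \<noteq> 1"
    and s: "0 \<le> s" and ca: "s = 0 \<Longrightarrow> c \<le> a" and da: "s = 0 \<Longrightarrow> d \<le> a"
    and th: "int \<theta> = a - b"
  shows "fqt q t (EE q t (b - c) s) * fqt q t (EE q t (a - d) s)
           / (fqt q t (EE q t (a - c) s) * fqt q t (EE q t (b - d) s))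
       = qpoch (EE q t (d - a) (- s)) q \<theta> / qpoch (EE q t (1 + d - a) (- s - 1)) q \<theta>
         * (qpoch (EE q t (1 + c - a) (- s - 1)) q \<theta> / qpoch (EE q t (c - a) (- s)) q \<theta>)"
proof -
  note E = EE_mult[OF q(2) t] EE_qpow[OF q(2) t] EE_q[OF q(2) t] EE_t[OF q(2) t]
  define A1 where "A1 = qpoch (EE q t (1 + b - d) s) q \<theta>"
  define A2 where "A2 = qpoch (EE q t (b - c) (s + 1)) q \<theta>"
  define A3 where "A3 = qpoch (EE q t (b - d) (s + 1)) q \<theta>"
  define A4 where "A4 = qpoch (EE q t (1 + b - c) s) q \<theta>"
  define f2 where "f2 = fqt q t (EE q t (a - d) s)"
  define f3 where "f3 = fqt q t (EE q t (a - c) s)"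
  have f2: "f2 \<noteq> 0" unfolding f2_def
    by (rule fqt_nz[OF q t gen s]) (use da in auto)
  have f3: "f3 \<noteq> 0" unfolding f3_def
    by (rule fqt_nz[OF q t gen s]) (use ca in auto)
  have eqa: "b - c + int \<theta> = a - c" "b - d + int \<theta> = a - d"
    "b - c + 1 = 1 + b - c" "b - d + 1 = 1 + b - d" using th by auto
  have sh1: "fqt q t (EE q t (b - c) s) = A2 / A4 * f3"
    using f_shift[OF q(1), of t "EE q t (b - c) s" \<theta>]
    unfolding A2_def A4_def f3_def by (simp add: E eqa)
  have sh4: "fqt q t (EE q t (b - d) s) = A3 / A1 * f2"
    using f_shift[OF q(1), of t "EE q t (b - d) s" \<theta>]
    unfolding A3_def A1_def f2_def by (simp add: E eqa)
  have lhs: "fqt q t (EE q t (b - c) s) * fqt q t (EE q t (a - d) s)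
           / (fqt q t (EE q t (a - c) s) * fqt q t (EE q t (b - d) s)) = A2 / A4 * (A1 / A3)"
    unfolding sh1 sh4 f2_def[symmetric] f3_def[symmetric] using f2 f3
    by (simp add: field_simps)
  define P1 where "P1 = (\<Prod>k<\<theta>. - EE q t (d - a + int k) (- s))"
  define P2 where "P2 = (\<Prod>k<\<theta>. - EE q t (1 + c - a + int k) (- s - 1))"
  define P3 where "P3 = (\<Prod>k<\<theta>. - EE q t (1 + d - a + int k) (- s - 1))"
  define P4 where "P4 = (\<Prod>k<\<theta>. - EE q t (c - a + int k) (- s))"
  have r1: "qpoch (EE q t (d - a) (- s)) q \<theta> = P1 * A1"
    using qpoch_reflect[OF q(2) t, of "d - a" "- s" \<theta>] th unfolding P1_def A1_def
    by (simp add: algebra_simps)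
  have r3: "qpoch (EE q t (1 + d - a) (- s - 1)) q \<theta> = P3 * A3"
    using qpoch_reflect[OF q(2) t, of "1 + d - a" "- s - 1" \<theta>] th unfolding P3_def A3_def
    by (simp add: algebra_simps)
  have r2: "qpoch (EE q t (1 + c - a) (- s - 1)) q \<theta> = P2 * A2"
    using qpoch_reflect[OF q(2) t, of "1 + c - a" "- s - 1" \<theta>] th unfolding P2_def A2_def
    by (simp add: algebra_simps)
  have r4: "qpoch (EE q t (c - a) (- s)) q \<theta> = P4 * A4"
    using qpoch_reflect[OF q(2) t, of "c - a" "- s" \<theta>] th unfolding P4_def A4_def
    by (simp add: algebra_simps)
  have P: "P1 * P2 = P3 * P4"
    unfolding P1_def P2_def P3_def P4_def prod.distrib[symmetric]
    by (rule prod.cong) (auto simp: E algebra_simps)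
  have P34: "P3 * P4 \<noteq> 0"
    unfolding P3_def P4_def using EE_nz[OF q(2) t] by simp
  show ?thesis unfolding lhs r1 r2 r3 r4
  proof -
    have "P1 * A1 / (P3 * A3) * (P2 * A2 / (P4 * A4)) = (P1 * P2) / (P3 * P4) * (A2 / A4 * (A1 / A3))"
      by (simp add: times_divide_times_eq mult_ac)
    also have "\<dots> = A2 / A4 * (A1 / A3)" using P P34 by simp
    finally show "A2 / A4 * (A1 / A3) = P1 * A1 / (P3 * A3) * (P2 * A2 / (P4 * A4))" by simp
  qed
qed

lemma cN_cong:
  "(\<And>i. i \<in> {1..n} \<Longrightarrow> z i = z' i) \<Longrightarrow> cN n th z q t = cN n th z' q t"
proof (induction n arbitrary: z z')
  case 0 then show ?case by simp
next
  case (Suc n)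
  have r: "cN n th (\<lambda>i. q powi (- int (th i (Suc n))) * z i) q t
         = cN n th (\<lambda>i. q powi (- int (th i (Suc n))) * z' i) q t"
    by (rule Suc.IH) (use Suc.prems in auto)
  have p: "\<And>i. 1 \<le> i \<Longrightarrow> i \<le> Suc n \<Longrightarrow> z i = z' i"
    using Suc.prems by auto
  show ?case unfolding cN.simps r
    by (intro if_cong refl arg_cong2[where f="(*)"] prod.cong) (simp_all add: p)
qed

lemma cN_scale:
  assumes "c \<noteq> 0"
  shows "cN n th (\<lambda>i. c * z i) q t = cN n th z q t"
proof (induction n arbitrary: z)
  case 0 then show ?case by simp
next
  case (Suc n)
  have r: "cN n th (\<lambda>i. q powi (- int (th i (Suc n))) * (c * z i)) q t
         = cN n th (\<lambda>i. q powi (- int (th i (Suc n))) * z i) q t"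
    using Suc.IH[of "\<lambda>i. q powi (- int (th i (Suc n))) * z i"] by (simp add: mult_ac)
  show ?case unfolding cN.simps r using assms
    by (intro if_cong refl arg_cong2[where f="(*)"] prod.cong) (simp_all add: field_simps)
qed

lemma tab_zero:
  assumes T: "is_tableau N lam tab"
  shows "k \<le> N \<Longrightarrow> k < i \<Longrightarrow> tab k i = 0"
proof (induction k arbitrary: i)
  case 0 then show ?case using T by (simp add: is_tableau_def)
next
  case (Suc k)
  then obtain i' where i: "i = Suc i'" "k < i'" by (cases i) auto
  have "Suc k \<in> {1..N}" using Suc.prems by auto
  then have "horizontal_strip (tab (Suc k)) (tab (Suc k - 1))" using T unfolding is_tableau_def by blast
  then have "horizontal_strip (tab (Suc k)) (tab k)" by simp
  then have "tab (Suc k) (Suc i') \<le> tab k i'" using i by (auto simp: horizontal_strip_def)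
  moreover have "tab k i' = 0" using Suc.IH[of i'] Suc.prems i by simp
  ultimately show ?case using i by simp
qed

lemma part_mono:
  assumes p: "is_partition p" and ij: "1 \<le> i" "i \<le> j"
  shows "p j \<le> p i"
  using ij(2)
proof (induction j rule: dec_induct)
  case base then show ?case by simp
next
  case (step n)
  have "p (Suc n) \<le> p n" using p ij step.hyps unfolding is_partition_def by auto
  then show ?case using step.IH by simp
qed

lemma EE_L1: assumes "q \<noteq> 0" "t \<noteq> 0"
  shows "t * EE q t a1 b1 / EE q t a2 b2 = EE q t (a1 - a2) (b1 + 1 - b2)"
  using assms by (simp add: EE_t EE_div)

lemma EE_L2: assumes "q \<noteq> 0" "t \<noteq> 0"
  shows "q * EE q t a1 b1 / EE q t a2 b2 = EE q t (a1 + 1 - a2) (b1 - b2)"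
  using assms by (simp add: EE_q EE_div)

lemma EE_qpowi: assumes "q \<noteq> 0" "t \<noteq> 0"
  shows "q powi x * EE q t a b = EE q t (x + a) b"
  using EE_mult[OF assms, of x 0 a b] by (simp add: EE_def)

lemma EE_L3: assumes "q \<noteq> 0" "t \<noteq> 0"
  shows "q powi x * EE q t a1 b1 / (t * EE q t a2 b2) = EE q t (x + a1 - a2) (b1 - (b2 + 1))"
  using assms by (simp add: EE_t EE_div EE_qpowi)

lemma EE_L4: assumes "q \<noteq> 0" "t \<noteq> 0"
  shows "q powi x * EE q t a1 b1 / EE q t a2 b2 = EE q t (x + a1 - a2) (b1 - b2)"
  using assms by (simp add: EE_div EE_qpowi)

lemma step:
  assumes q: "norm q < 1" "q \<noteq> 0" and t: "t \<noteq> 0"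
    and gen: "\<And>a b :: int. (a, b) \<noteq> (0, 0) \<Longrightarrow> q powi a * t powi b \<noteq> 1"
    and M: "1 \<le> M"
    and lp: "is_partition lam" and mp: "is_partition mu"
    and hs: "horizontal_strip lam mu"
    and mz: "\<And>i. M < i \<Longrightarrow> mu i = 0"
    and th: "\<And>i. i \<in> {1..M} \<Longrightarrow> th i (Suc M) = lam i - mu i"
    and z: "\<And>k. k \<in> {1..Suc M} \<Longrightarrow> z k = t ^ (Suc M - k) * q ^ lam k"
  shows "psi_skew q t lam mu =
    (\<Prod>j\<in>{1..M}. \<Prod>i\<in>{1..j}.
         qpoch (t * z (Suc j) / z i) q (th i (Suc M))
         / qpoch (q * z (Suc j) / z i) q (th i (Suc M))
         * (qpoch (q powi (1 - int (th j (Suc M))) * z j / (t * z i)) q (th i (Suc M))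
         / qpoch (q powi (- int (th j (Suc M))) * z j / z i) q (th i (Suc M))))"
proof -
  have pw: "\<And>X n. q powi X * t ^ n = EE q t X (int n)" by (simp add: EE_def)
  have zE: "z k = EE q t (int (lam k)) (int (Suc M - k))" if "k \<in> {1..Suc M}" for k
  proof -
    have "z k = q powi int (lam k) * t ^ (Suc M - k)" using z[OF that] by (simp add: mult.commute)
    then show ?thesis by (simp only: pw)
  qed
  have hs': "\<And>i. 1 \<le> i \<Longrightarrow> lam (Suc i) \<le> mu i \<and> mu i \<le> lam i"
    using hs unfolding horizontal_strip_def by auto
  define F where "F = (\<lambda>i j.
       fqt q t (q powi (int (mu i) - int (mu j)) * t ^ (j - i))
     * fqt q t (q powi (int (lam i) - int (lam (Suc j))) * t ^ (j - i))
     / (fqt q t (q powi (int (lam i) - int (mu j)) * t ^ (j - i))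
     * fqt q t (q powi (int (mu i) - int (lam (Suc j))) * t ^ (j - i))))"
  have psi: "psi_skew q t lam mu = (\<Prod>j\<in>{1..plength mu}. \<Prod>i\<in>{1..j}. F i j)"
    unfolding psi_skew_def F_def by simp
  define S where "S = {i. 1 \<le> i \<and> 0 < mu i}"
  have SM: "S \<subseteq> {1..M}"
  proof
    fix x assume "x \<in> S"
    then have x: "1 \<le> x" "0 < mu x" by (auto simp: S_def)
    then have "\<not> M < x" using mz[of x] by auto
    then show "x \<in> {1..M}" using x by auto
  qed
  have Lle: "plength mu \<le> M"
    unfolding plength_def S_def[symmetric] using card_mono[OF _ SM] by simp
  have Lpos: "j \<le> plength mu" if "1 \<le> j" "0 < mu j" for j
  proof -
    have "{1..j} \<subseteq> S" unfolding S_def using part_mono[OF mp] that by fastforce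
    then have "card {1..j} \<le> card S" using finite_subset[OF SM] by (intro card_mono) auto
    then show ?thesis unfolding plength_def S_def by simp
  qed
  have one: "(\<Prod>i\<in>{1..j}. F i j) = 1" if j: "j \<in> {1..M} - {1..plength mu}" for j
  proof (rule prod.neutral, rule ballI)
    fix i assume i: "i \<in> {1..j}"
    have mj: "mu j = 0" using Lpos[of j] j by fastforce
    have lj: "lam (Suc j) = 0" using hs'[of j] j mj by auto
    have nz: "fqt q t (EE q t (int x) (int (j - i))) \<noteq> 0" for x
      by (rule fqt_nz[OF q t gen]) auto
    show "F i j = 1" unfolding F_def pw using mj lj nz[of "mu i"] nz[of "lam i"] by simp
  qed
  have ext: "(\<Prod>j\<in>{1..plength mu}. \<Prod>i\<in>{1..j}. F i j) = (\<Prod>j\<in>{1..M}. \<Prod>i\<in>{1..j}. F i j)"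
    by (rule prod.mono_neutral_left) (use Lle one in auto)
  show ?thesis unfolding psi ext
  proof (intro prod.cong refl)
    fix j i assume j: "j \<in> {1..M}" and i: "i \<in> {1..j}"
    define a where "a = int (lam i)"
    define b where "b = int (mu i)"
    define c where "c = int (mu j)"
    define d where "d = int (lam (Suc j))"
    define s where "s = int (j - i)"
    define \<theta> where "\<theta> = th i (Suc M)"
    have s0: "0 \<le> s" unfolding s_def by simp
    have ca: "s = 0 \<Longrightarrow> c \<le> a" unfolding s_def c_def a_def using hs'[of i] i by auto
    have da: "s = 0 \<Longrightarrow> d \<le> a" unfolding s_def d_def a_def using part_mono[OF lp, of i "Suc i"] i by auto
    have thi: "int \<theta> = a - b" unfolding \<theta>_def a_def b_def using th[of i] hs'[of i] i j by auto
    have thj: "int (th j (Suc M)) = int (lam j) - c" unfolding c_def using th[of j] hs'[of j] j by auto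
    have Fe: "F i j = fqt q t (EE q t (b - c) s) * fqt q t (EE q t (a - d) s)
           / (fqt q t (EE q t (a - c) s) * fqt q t (EE q t (b - d) s))"
      unfolding F_def pw a_def b_def c_def d_def s_def ..
    have zi: "z i = EE q t a (int (Suc M - i))" using zE[of i] i j unfolding a_def by auto
    have zj: "z j = EE q t (int (lam j)) (int (Suc M - j))" using zE[of j] j by auto
    have zsj: "z (Suc j) = EE q t d (int (Suc M - Suc j))" using zE[of "Suc j"] j unfolding d_def by auto
    have e1: "int (Suc M - Suc j) + 1 - int (Suc M - i) = - s" unfolding s_def using i j by auto
    have e2: "int (Suc M - Suc j) - int (Suc M - i) = - s - 1" unfolding s_def using i j by auto
    have e3: "int (Suc M - j) - (int (Suc M - i) + 1) = - s - 1" unfolding s_def using i j by auto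
    have e4: "int (Suc M - j) - int (Suc M - i) = - s" unfolding s_def using i j by auto
    have g1: "t * z (Suc j) / z i = EE q t (d - a) (- s)"
      unfolding zi zsj EE_L1[OF q(2) t] e1 ..
    have g2: "q * z (Suc j) / z i = EE q t (1 + d - a) (- s - 1)"
      unfolding zi zsj EE_L2[OF q(2) t] e2 by (simp add: algebra_simps)
    have g3: "q powi (1 - int (th j (Suc M))) * z j / (t * z i) = EE q t (1 + c - a) (- s - 1)"
      unfolding zi zj EE_L3[OF q(2) t] e3 thj by (simp add: algebra_simps)
    have g4: "q powi (- int (th j (Suc M))) * z j / z i = EE q t (c - a) (- s)"
      unfolding zi zj EE_L4[OF q(2) t] e4 thj by (simp add: algebra_simps)
    show "F i j = qpoch (t * z (Suc j) / z i) q (th i (Suc M))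
         / qpoch (q * z (Suc j) / z i) q (th i (Suc M))
         * (qpoch (q powi (1 - int (th j (Suc M))) * z j / (t * z i)) q (th i (Suc M))
         / qpoch (q powi (- int (th j (Suc M))) * z j / z i) q (th i (Suc M)))"
      unfolding Fe g1 g2 g3 g4 \<theta>_def[symmetric]
      by (rule core[OF q t gen s0 ca da thi])
  qed
qed

lemma main_ind:
  assumes q: "norm q < 1" "q \<noteq> 0" and t: "t \<noteq> 0"
    and gen: "\<And>a b :: int. (a, b) \<noteq> (0, 0) \<Longrightarrow> q powi a * t powi b \<noteq> 1"
  shows "is_tableau (Suc n) (tab (Suc n)) tab \<Longrightarrow> psi_tab q t (Suc n) tab =
         cN (Suc n) (tab_matrix tab) (\<lambda>i. t ^ (Suc n - i) * q ^ (tab (Suc n) i)) q t"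
proof (induction n)
  case 0
  then have "tab 0 = (\<lambda>_. 0)" by (simp add: is_tableau_def)
  then show ?case by (simp add: psi_tab_def psi_skew_def plength_def)
next
  case (Suc n)
  define M where "M = Suc n"
  have T: "is_tableau (Suc M) (tab (Suc M)) tab" using Suc.prems unfolding M_def .
  have T': "is_tableau M (tab M) tab" using T unfolding is_tableau_def by auto
  have IH: "psi_tab q t M tab = cN M (tab_matrix tab) (\<lambda>i. t ^ (M - i) * q ^ (tab M i)) q t"
    using Suc.IH T' unfolding M_def by simp
  have M1: "1 \<le> M" "M \<noteq> 0" unfolding M_def by auto
  have SM: "Suc M \<in> {1..Suc M}" by simp
  have hsM: "horizontal_strip (tab (Suc M)) (tab M)"
    using T SM unfolding is_tableau_def by (metis diff_Suc_1)
  have lpart: "is_partition (tab (Suc M))" using T SM unfolding is_tableau_def by blast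
  have mpart: "is_partition (tab M)" using T M1 unfolding is_tableau_def by auto
  have psiS: "psi_tab q t (Suc M) tab = psi_tab q t M tab * psi_skew q t (tab (Suc M)) (tab M)"
    unfolding psi_tab_def by (simp add: prod.cl_ivl_Suc)
  have cong: "cN M (tab_matrix tab) (\<lambda>i. q powi (- int (tab_matrix tab i (Suc M))) * (t ^ (Suc M - i) * q ^ (tab (Suc M) i))) q t
      = cN M (tab_matrix tab) (\<lambda>i. t * (t ^ (M - i) * q ^ (tab M i))) q t"
  proof (rule cN_cong)
    fix i assume i: "i \<in> {1..M}"
    define a where "a = tab (Suc M) i"
    define b where "b = tab M i"
    have ba: "b \<le> a" using hsM i unfolding horizontal_strip_def a_def b_def by auto
    have tm: "tab_matrix tab i (Suc M) = a - b" unfolding tab_matrix_def a_def b_def by simp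
    have qa: "q ^ a = q ^ (a - b) * q ^ b" using ba by (simp flip: power_add)
    have qi: "q powi (- int (a - b)) * q ^ (a - b) = 1" using q(2) by (simp add: power_int_minus)
    have ts: "t ^ (Suc M - i) = t * t ^ (M - i)" using i by (simp add: Suc_diff_le)
    show "q powi (- int (tab_matrix tab i (Suc M))) * (t ^ (Suc M - i) * q ^ (tab (Suc M) i))
        = t * (t ^ (M - i) * q ^ (tab M i))"
      unfolding tm a_def[symmetric] b_def[symmetric] ts qa
      using qi by (simp add: mult_ac)
  qed
  have stp: "psi_skew q t (tab (Suc M)) (tab M) =
    (\<Prod>j\<in>{1..M}. \<Prod>i\<in>{1..j}.
         qpoch (t * (\<lambda>i. t ^ (Suc M - i) * q ^ (tab (Suc M) i)) (Suc j) / (\<lambda>i. t ^ (Suc M - i) * q ^ (tab (Suc M) i)) i) q (tab_matrix tab i (Suc M))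
         / qpoch (q * (\<lambda>i. t ^ (Suc M - i) * q ^ (tab (Suc M) i)) (Suc j) / (\<lambda>i. t ^ (Suc M - i) * q ^ (tab (Suc M) i)) i) q (tab_matrix tab i (Suc M))
         * (qpoch (q powi (1 - int (tab_matrix tab j (Suc M))) * (\<lambda>i. t ^ (Suc M - i) * q ^ (tab (Suc M) i)) j / (t * (\<lambda>i. t ^ (Suc M - i) * q ^ (tab (Suc M) i)) i)) q (tab_matrix tab i (Suc M))
         / qpoch (q powi (- int (tab_matrix tab j (Suc M))) * (\<lambda>i. t ^ (Suc M - i) * q ^ (tab (Suc M) i)) j / (\<lambda>i. t ^ (Suc M - i) * q ^ (tab (Suc M) i)) i) q (tab_matrix tab i (Suc M))))"
  proof (rule step[OF q t gen M1(1) lpart mpart hsM])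
    show "\<And>i. M < i \<Longrightarrow> tab M i = 0" using tab_zero[OF T] by simp
    show "\<And>i. i \<in> {1..M} \<Longrightarrow> tab_matrix tab i (Suc M) = tab (Suc M) i - tab M i"
      by (simp add: tab_matrix_def)
    show "\<And>k. k \<in> {1..Suc M} \<Longrightarrow> (\<lambda>i. t ^ (Suc M - i) * q ^ (tab (Suc M) i)) k = t ^ (Suc M - k) * q ^ tab (Suc M) k"
      by simp
  qed
  have cNS: "cN (Suc M) (tab_matrix tab) (\<lambda>i. t ^ (Suc M - i) * q ^ (tab (Suc M) i)) q t
     = cN M (tab_matrix tab) (\<lambda>i. q powi (- int (tab_matrix tab i (Suc M))) * (t ^ (Suc M - i) * q ^ (tab (Suc M) i))) q t
       * psi_skew q t (tab (Suc M)) (tab M)"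
    unfolding stp cN.simps(2)[of M] using M1(2) by (simp only: if_False)
  show ?case
    unfolding M_def[symmetric] psiS cNS cong cN_scale[OF t] IH ..
qed

theorem lemma3p1:
  fixes q t :: complex and N :: nat and lam :: "nat \<Rightarrow> nat" and tab :: "nat \<Rightarrow> nat \<Rightarrow> nat"
  assumes q_small: "0 < norm q" "norm q < 1"
    and t_nz: "t \<noteq> 0"
    and generic: "\<And>a b :: int. (a, b) \<noteq> (0, 0) \<Longrightarrow> q powi a * t powi b \<noteq> 1"
    and N_pos: "1 \<le> N"
    and lam_part: "is_partition lam"
    and lam_len: "\<forall>i>N. lam i = 0"
    and T: "is_tableau N lam tab"
  shows "psi_tab q t N tab =
         cN N (tab_matrix tab) (\<lambda>i. t ^ (N - i) * q ^ (lam i)) q t"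
proof -
  obtain n where n: "N = Suc n" using N_pos by (cases N) auto
  have lt: "lam = tab N" using T by (simp add: is_tableau_def)
  have q0: "q \<noteq> 0" using q_small by auto
  show ?thesis using main_ind[OF q_small(2) q0 t_nz generic, of n tab] T unfolding n lt by simp
qed

end
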